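(* Let $\mathbf{P}_m,\mathbf{P}_M$ be probability measures on a measurable space $\mathcal{Y}$, let $r:\mathcal{Y}\to\mathbb{R}$ be measurable and integrable under both $\mathbf{P}_m$ and $\mathbf{P}_M$, and let $\omega:\mathbb{R}\to[0,1]$ be measurable and non-decreasing; set $\omega_r(y)=\omega(r(y))$, $\nu=1-\mathbf{E}_{\mathbf{P}_m}[\omega_r]$, and $\mathbf{P}_{\mathrm{RSD}}=\omega_r\mathbf{P}_m+\nu\mathbf{P}_M$ (the probability measure $B\mapsto\int_B\omega_r\,d\mathbf{P}_m+\nu\mathbf{P}_M(B)$). If $\mathbf{E}_{\mathbf{P}_M}[r]\ge\mathbf{E}_{\mathbf{P}_m}[r]$, then $$\mathbf{E}_{y\sim\mathbf{P}_{\mathrm{RSD}}}[r(y)]\ \ge\ \mathbf{E}_{y\sim\mathbf{P}_m}[r(y)].$$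
   Context: $\mathbf{P}_m$ and $\mathbf{P}_M$ represent the next-step distributions of a draft model and a target model given a fixed context, $r$ is a reward function on steps, and $\mathbf{P}_{\mathrm{RSD}}$ is the mixture distribution produced by accepting a draft step $y$ with probability $\omega(r(y))$ and otherwise sampling from the target model. *)

theory Defs
  imports "HOL-Probability.Probability"
begin

definition rsd_nu :: "'a measure \<Rightarrow> (real \<Rightarrow> real) \<Rightarrow> ('a \<Rightarrow> real) \<Rightarrow> real" where
  "rsd_nu Pm \<omega> r = 1 - (\<integral>y. \<omega> (r y) \<partial>Pm)"

definition rsd_measure ::
  "'a measure \<Rightarrow> 'a measure \<Rightarrow> (real \<Rightarrow> real) \<Rightarrow> ('a \<Rightarrow> real) \<Rightarrow> 'a measure" where
  "rsd_measure Pm PM \<omega> r =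
     measure_of (space Pm) (sets Pm)
       (\<lambda>B. (\<integral>\<^sup>+ y. ennreal (\<omega> (r y)) * indicator B y \<partial>Pm)
            + ennreal (rsd_nu Pm \<omega> r) * emeasure PM B)"

end

theory Submission
  imports Defs
begin


lemma nn_integral_sum_measure:
  assumes sA: "sets A = sets M" and sB: "sets B = sets M"
    and e: "\<And>X. X \<in> sets M \<Longrightarrow> emeasure M X = emeasure A X + emeasure B X"
    and f: "f \<in> borel_measurable M"
  shows "integral\<^sup>N M f = integral\<^sup>N A f + integral\<^sup>N B f"
  using f
proof (induction rule: borel_measurable_induct)
  case (cong f g)
  have spA: "space A = space M" and spB: "space B = space M"
    using sA sB sets_eq_imp_space_eq by blast+
  have "integral\<^sup>N M f = integral\<^sup>N M g" by (rule nn_integral_cong) (use cong in auto)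
  moreover have "integral\<^sup>N A f = integral\<^sup>N A g" by (rule nn_integral_cong) (use cong spA in auto)
  moreover have "integral\<^sup>N B f = integral\<^sup>N B g" by (rule nn_integral_cong) (use cong spB in auto)
  ultimately show ?case using cong by simp
next
  case (set X)
  then show ?case using sA sB e by (simp add: nn_integral_indicator)
next
  case (mult u c)
  have mA: "u \<in> borel_measurable A" and mB: "u \<in> borel_measurable B"
    using mult(2) sA sB measurable_cong_sets by blast+
  show ?case using mult mA mB by (simp add: nn_integral_cmult distrib_left)
next
  case (add u v)
  have mA: "u \<in> borel_measurable A" "v \<in> borel_measurable A" and mB: "u \<in> borel_measurable B" "v \<in> borel_measurable B"
    using add sA sB measurable_cong_sets by blast+
  show ?case using add mA mB by (simp add: nn_integral_add add_ac)
next
  case (seq U)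
  have mA: "\<And>i. U i \<in> borel_measurable A" and mB: "\<And>i. U i \<in> borel_measurable B"
    using seq(1) sA sB measurable_cong_sets by blast+
  have inc: "incseq (\<lambda>i. integral\<^sup>N A (U i))" "incseq (\<lambda>i. integral\<^sup>N B (U i))"
    using \<open>incseq U\<close> by (auto simp: incseq_def le_fun_def intro!: nn_integral_mono)+
  have "integral\<^sup>N M (SUP i. U i) = (SUP i. integral\<^sup>N M (U i))"
    unfolding SUP_apply[abs_def] by (rule nn_integral_monotone_convergence_SUP) (use seq in auto)
  also have "\<dots> = (SUP i. integral\<^sup>N A (U i) + integral\<^sup>N B (U i))" using seq by simp
  also have "\<dots> = (SUP i. integral\<^sup>N A (U i)) + (SUP i. integral\<^sup>N B (U i))"
    by (rule ennreal_SUP_add[OF inc])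
  also have "(SUP i. integral\<^sup>N A (U i)) = integral\<^sup>N A (SUP i. U i)"
    unfolding SUP_apply[abs_def] by (rule nn_integral_monotone_convergence_SUP[symmetric]) (use seq mA in auto)
  also have "(SUP i. integral\<^sup>N B (U i)) = integral\<^sup>N B (SUP i. U i)"
    unfolding SUP_apply[abs_def] by (rule nn_integral_monotone_convergence_SUP[symmetric]) (use seq mB in auto)
  finally show ?case .
qed


theorem proposition2:
  fixes Pm PM :: "'a measure" and r :: "'a \<Rightarrow> real" and \<omega> :: "real \<Rightarrow> real"
  assumes "prob_space Pm" and "prob_space PM"
    and "sets PM = sets Pm"
    and "r \<in> borel_measurable Pm"
    and "integrable Pm r" and "integrable PM r"
    and "\<omega> \<in> borel_measurable borel"
    and "\<And>x. 0 \<le> \<omega> x \<and> \<omega> x \<le> 1"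
    and "mono \<omega>"
    and "(\<integral>y. r y \<partial>PM) \<ge> (\<integral>y. r y \<partial>Pm)"
  shows "(\<integral>y. r y \<partial>(rsd_measure Pm PM \<omega> r)) \<ge> (\<integral>y. r y \<partial>Pm)"
proof -
  interpret m: prob_space Pm by fact
  interpret M: prob_space PM by fact
  note sPM = assms(3)
  have rm[measurable]: "r \<in> borel_measurable Pm" by fact
  have rM[measurable]: "r \<in> borel_measurable PM" using rm sPM measurable_cong_sets by blast
  have om[measurable]: "\<omega> \<in> borel_measurable borel" by fact
  have w01: "\<And>x. 0 \<le> \<omega> x" "\<And>x. \<omega> x \<le> 1" using assms(8) by auto
  define \<nu> where "\<nu> = rsd_nu Pm \<omega> r"
  have wint: "integrable Pm (\<lambda>y. \<omega> (r y))"
    by (rule m.integrable_const_bound[where B=1]) (use w01 in auto)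
  have Ew_le: "(\<integral>y. \<omega> (r y) \<partial>Pm) \<le> 1"
  proof -
    have "(\<integral>y. \<omega> (r y) \<partial>Pm) \<le> (\<integral>y. 1 \<partial>Pm)"
      by (rule integral_mono) (use wint w01 in auto)
    then show ?thesis by (simp add: m.prob_space)
  qed
  have nu_nn: "0 \<le> \<nu>" unfolding \<nu>_def rsd_nu_def using Ew_le by simp
  define D where "D = density Pm (\<lambda>y. ennreal (\<omega> (r y)))"
  define E where "E = density PM (\<lambda>_. ennreal \<nu>)"
  define F where "F = rsd_measure Pm PM \<omega> r"
  have sD: "sets D = sets Pm" and sE: "sets E = sets Pm" unfolding D_def E_def using sPM by auto
  have sF: "sets F = sets Pm" unfolding F_def rsd_measure_def
    by (simp add: sets_measure_of_conv sets.sigma_sets_eq sets.space_closed)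
  have eD: "emeasure D X = (\<integral>\<^sup>+ y. ennreal (\<omega> (r y)) * indicator X y \<partial>Pm)" if "X \<in> sets Pm" for X
    unfolding D_def using that by (simp add: emeasure_density)
  have eE: "emeasure E X = ennreal \<nu> * emeasure PM X" if "X \<in> sets Pm" for X
    unfolding E_def using that sPM by (simp add: emeasure_density nn_integral_cmult_indicator)
  have mu_eq: "\<And>X. X \<in> sets Pm \<Longrightarrow> (\<integral>\<^sup>+ y. ennreal (\<omega> (r y)) * indicator X y \<partial>Pm)
            + ennreal (rsd_nu Pm \<omega> r) * emeasure PM X = emeasure D X + emeasure E X"
    using eD eE \<nu>_def by simp
  have ca: "countably_additive (sets Pm) (\<lambda>B. (\<integral>\<^sup>+ y. ennreal (\<omega> (r y)) * indicator B y \<partial>Pm)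
            + ennreal (rsd_nu Pm \<omega> r) * emeasure PM B)"
    unfolding countably_additive_def
  proof (intro allI impI)
    fix A :: "nat \<Rightarrow> 'a set" assume A: "range A \<subseteq> sets Pm" "disjoint_family A" "\<Union> (range A) \<in> sets Pm"
    have AD: "(\<Sum>i. emeasure D (A i)) = emeasure D (\<Union> (range A))"
      using A sD by (intro suminf_emeasure) auto
    have AE: "(\<Sum>i. emeasure E (A i)) = emeasure E (\<Union> (range A))"
      using A sE by (intro suminf_emeasure) auto
    have "(\<Sum>i. (\<integral>\<^sup>+ y. ennreal (\<omega> (r y)) * indicator (A i) y \<partial>Pm)
            + ennreal (rsd_nu Pm \<omega> r) * emeasure PM (A i)) = (\<Sum>i. emeasure D (A i) + emeasure E (A i))"
      using A mu_eq by auto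
    also have "\<dots> = (\<Sum>i. emeasure D (A i)) + (\<Sum>i. emeasure E (A i))"
      by (rule suminf_add[symmetric]) auto
    also have "\<dots> = emeasure D (\<Union> (range A)) + emeasure E (\<Union> (range A))" using AD AE by simp
    also have "\<dots> = (\<integral>\<^sup>+ y. ennreal (\<omega> (r y)) * indicator (\<Union> (range A)) y \<partial>Pm)
            + ennreal (rsd_nu Pm \<omega> r) * emeasure PM (\<Union> (range A))" using mu_eq A by simp
    finally show "(\<Sum>i. (\<integral>\<^sup>+ y. ennreal (\<omega> (r y)) * indicator (A i) y \<partial>Pm)
            + ennreal (rsd_nu Pm \<omega> r) * emeasure PM (A i)) = (\<integral>\<^sup>+ y. ennreal (\<omega> (r y)) * indicator (\<Union> (range A)) y \<partial>Pm)
            + ennreal (rsd_nu Pm \<omega> r) * emeasure PM (\<Union> (range A))" .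
  qed
  have eF: "emeasure F X = emeasure D X + emeasure E X" if "X \<in> sets Pm" for X
    unfolding F_def rsd_measure_def
    apply (subst emeasure_measure_of_sigma)
    using ca that mu_eq by (auto simp: positive_def sets.sigma_algebra_axioms)
  have nnF: "integral\<^sup>N F f = integral\<^sup>N D f + integral\<^sup>N E f" if "f \<in> borel_measurable Pm" for f
    by (rule nn_integral_sum_measure[OF _ _ _ that[folded measurable_cong_sets[OF sF refl]]])
       (use sD sE sF eF in auto)
  have wr_int: "integrable Pm (\<lambda>y. \<omega> (r y) * r y)"
    by (rule Bochner_Integration.integrable_bound[OF assms(5)]) (use rm in simp, rule AE_I2, use w01 in \<open>simp add: abs_mult mult_left_le_one_le\<close>)
  have iD: "integrable D r" unfolding D_def
    by (subst integrable_density) (use wr_int w01 in auto)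
  have iE: "integrable E r" unfolding E_def
    by (subst integrable_density) (use assms(6) nu_nn in auto)
  have intD: "integral\<^sup>L D r = (\<integral>y. \<omega> (r y) * r y \<partial>Pm)" unfolding D_def
    by (subst integral_density) (use w01 in auto)
  have intE: "integral\<^sup>L E r = \<nu> * (\<integral>y. r y \<partial>PM)" unfolding E_def
    by (subst integral_density) (use nu_nn in auto)
  have p: "(\<integral>\<^sup>+ y. ennreal (r y) \<partial>F) = (\<integral>\<^sup>+ y. ennreal (r y) \<partial>D) + (\<integral>\<^sup>+ y. ennreal (r y) \<partial>E)"
    by (rule nnF) measurable
  have n: "(\<integral>\<^sup>+ y. ennreal (- r y) \<partial>F) = (\<integral>\<^sup>+ y. ennreal (- r y) \<partial>D) + (\<integral>\<^sup>+ y. ennreal (- r y) \<partial>E)"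
    by (rule nnF) measurable
  have rF: "r \<in> borel_measurable F" using rm sF measurable_cong_sets by blast
  have fin: "(\<integral>\<^sup>+ y. ennreal (r y) \<partial>D) < top" "(\<integral>\<^sup>+ y. ennreal (r y) \<partial>E) < top"
      "(\<integral>\<^sup>+ y. ennreal (- r y) \<partial>D) < top" "(\<integral>\<^sup>+ y. ennreal (- r y) \<partial>E) < top"
    using integrableD[OF iD] integrableD[OF iE] by (auto simp: less_top)
  have iF: "integrable F r" unfolding real_integrable_def using rF p n fin by auto
  have "integral\<^sup>L F r = integral\<^sup>L D r + integral\<^sup>L E r"
    unfolding real_lebesgue_integral_def[OF iF] real_lebesgue_integral_def[OF iD]
      real_lebesgue_integral_def[OF iE] p n using fin by (simp add: enn2real_plus)
  then have IF: "integral\<^sup>L F r = (\<integral>y. \<omega> (r y) * r y \<partial>Pm) + \<nu> * (\<integral>y. r y \<partial>PM)"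
    using intD intE by simp
  define c where "c = (\<integral>y. r y \<partial>Pm)"
  have key: "(\<integral>y. c * \<omega> (r y) + \<omega> c * (r y - c) \<partial>Pm) \<le> (\<integral>y. \<omega> (r y) * r y \<partial>Pm)"
  proof (rule integral_mono)
    show "integrable Pm (\<lambda>y. c * \<omega> (r y) + \<omega> c * (r y - c))"
      using wint assms(5) by auto
    show "integrable Pm (\<lambda>y. \<omega> (r y) * r y)" by (fact wr_int)
    fix y
    have "0 \<le> (r y - c) * (\<omega> (r y) - \<omega> c)"
    proof (cases "r y \<le> c")
      case True
      then have "\<omega> (r y) \<le> \<omega> c" by (rule monoD[OF assms(9)])
      then show ?thesis using True mult_nonpos_nonpos[of "r y - c" "\<omega> (r y) - \<omega> c"] by linarith
    next
      case False
      then have "\<omega> c \<le> \<omega> (r y)" by (intro monoD[OF assms(9)]) simp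
      then show ?thesis using False mult_nonneg_nonneg[of "r y - c" "\<omega> (r y) - \<omega> c"] by linarith
    qed
    then show "c * \<omega> (r y) + \<omega> c * (r y - c) \<le> \<omega> (r y) * r y" by (simp add: algebra_simps)
  qed
  have "(\<integral>y. c * \<omega> (r y) + \<omega> c * (r y - c) \<partial>Pm) = c * (\<integral>y. \<omega> (r y) \<partial>Pm)"
    using wint assms(5) by (simp add: c_def m.prob_space)
  with key have k2: "c * (\<integral>y. \<omega> (r y) \<partial>Pm) \<le> (\<integral>y. \<omega> (r y) * r y \<partial>Pm)" by simp
  have "\<nu> * c \<le> \<nu> * (\<integral>y. r y \<partial>PM)" using nu_nn assms(10) c_def by (simp add: mult_left_mono)
  moreover have "c = c * (\<integral>y. \<omega> (r y) \<partial>Pm) + \<nu> * c" unfolding \<nu>_def rsd_nu_def by (simp add: algebra_simps)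
  ultimately have "c \<le> integral\<^sup>L F r" using IF k2 by linarith
  then show ?thesis unfolding F_def c_def .
qed
end
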